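(* Let $P$ be a set of $n$ points in the plane in general position and run the conflict-list randomized incremental construction of the Delaunay triangulation with a uniformly random insertion order. Then for every constant $c>0$ there is a constant $C>0$ such that, for every stage $i\le n$, the work of stage $i$ is at most $C\,n\log n$ with probability at least $1-n^{-c}$. *)

theory Defs
  imports "HOL-Probability.Probability" "HOL-Combinatorics.Multiset_Permutations"
begin

type_synonym pt = "real \<times> real"

text \<open>Orientation predicate: positive iff a, b, c are in counterclockwise order.\<close>
definition orient :: "pt \<Rightarrow> pt \<Rightarrow> pt \<Rightarrow> real" where
  "orient a b c = (fst b - fst a) * (snd c - snd a) - (snd b - snd a) * (fst c - fst a)"

text \<open>In-circle determinant: for counterclockwise a, b, c it is positive iff d lies
  strictly inside the circumcircle of a, b, c.\<close>
definition incircle :: "pt \<Rightarrow> pt \<Rightarrow> pt \<Rightarrow> pt \<Rightarrow> real" where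
  "incircle a b c d =
     (let ax = fst a - fst d; ay = snd a - snd d;
          bx = fst b - fst d; by = snd b - snd d;
          cx = fst c - fst d; cy = snd c - snd d;
          a2 = ax^2 + ay^2; b2 = bx^2 + by^2; c2 = cx^2 + cy^2
      in ax * (by * c2 - b2 * cy) - ay * (bx * c2 - b2 * cx) + a2 * (bx * cy - by * cx))"

definition general_position :: "pt set \<Rightarrow> bool" where
  "general_position P \<longleftrightarrow>
     (\<forall>a\<in>P. \<forall>b\<in>P. \<forall>c\<in>P. distinct [a, b, c] \<longrightarrow> orient a b c \<noteq> 0) \<and>
     (\<forall>a\<in>P. \<forall>b\<in>P. \<forall>c\<in>P. \<forall>d\<in>P. distinct [a, b, c, d] \<longrightarrow> incircle a b c d \<noteq> 0)"

text \<open>Configurations of the Delaunay triangulation: bounded triangles (given by their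
  vertex set) and unbounded faces, represented by directed hull edges (a, b) with the
  point set on the left of a->b.\<close>
datatype cfg = Tri "pt set" | HEdge pt pt

definition delaunay_triangles :: "pt set \<Rightarrow> pt set set" where
  "delaunay_triangles S =
     {{a, b, c} | a b c. a \<in> S \<and> b \<in> S \<and> c \<in> S \<and> orient a b c > 0 \<and>
                         (\<forall>d\<in>S. \<not> incircle a b c d > 0)}"

definition hull_edges :: "pt set \<Rightarrow> (pt \<times> pt) set" where
  "hull_edges S = {(a, b) | a b. a \<in> S \<and> b \<in> S \<and> a \<noteq> b \<and> (\<forall>d\<in>S. orient a b d \<ge> 0)}"

definition DT :: "pt set \<Rightarrow> cfg set" where
  "DT S = Tri ` delaunay_triangles S \<union> (\<lambda>(a, b). HEdge a b) ` hull_edges S"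

fun in_conflict :: "cfg \<Rightarrow> pt \<Rightarrow> bool" where
  "in_conflict (Tri T) q = (\<exists>a b c. T = {a, b, c} \<and> orient a b c > 0 \<and> incircle a b c q > 0)"
| "in_conflict (HEdge a b) q = (orient a b q < 0)"

definition conflict_list :: "cfg \<Rightarrow> pt set \<Rightarrow> pt set" where
  "conflict_list t R = {q \<in> R. in_conflict t q}"

text \<open>Work of stage i (1-based) of the conflict-list randomized incremental construction
  for insertion order xs: stage i inserts xs ! (i - 1).\<close>
definition stage_work :: "pt list \<Rightarrow> nat \<Rightarrow> nat" where
  "stage_work xs i =
     (let Sold = set (take (i - 1) xs); Snew = set (take i xs);
          Rold = set (drop (i - 1) xs); Rnew = set (drop i xs);
          created = DT Snew - DT Sold; destroyed = DT Sold - DT Snew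
      in (\<Sum>t\<in>created. 1 + card (conflict_list t Rnew)) +
         (\<Sum>t\<in>destroyed. 1 + card (conflict_list t Rold)))"

end

theory Submission
  imports Defs
begin


definition LL :: "pt \<Rightarrow> real" where "LL p = fst p ^ 2 + snd p ^ 2"

definition det3 :: "real \<Rightarrow> real \<Rightarrow> real \<Rightarrow> real \<Rightarrow> real \<Rightarrow> real \<Rightarrow> real \<Rightarrow> real \<Rightarrow> real \<Rightarrow> real" where
  "det3 m00 m01 m02 m10 m11 m12 m20 m21 m22 =
     m00*(m11*m22-m12*m21) - m01*(m10*m22-m12*m20) + m02*(m10*m21-m11*m20)"

definition cA :: "pt \<Rightarrow> pt \<Rightarrow> pt \<Rightarrow> real" where
  "cA a b c = - det3 (snd a) (LL a) 1 (snd b) (LL b) 1 (snd c) (LL c) 1"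
definition cB :: "pt \<Rightarrow> pt \<Rightarrow> pt \<Rightarrow> real" where
  "cB a b c = det3 (fst a) (LL a) 1 (fst b) (LL b) 1 (fst c) (LL c) 1"
definition cG :: "pt \<Rightarrow> pt \<Rightarrow> pt \<Rightarrow> real" where
  "cG a b c = det3 (fst a) (snd a) (LL a) (fst b) (snd b) (LL b) (fst c) (snd c) (LL c)"

lemma incircle_affine:
  "incircle a b c d = - orient a b c * LL d + cA a b c * fst d + cB a b c * snd d + cG a b c"
  unfolding incircle_def orient_def LL_def cA_def cB_def cG_def det3_def Let_def
  by (simp add: power2_eq_square algebra_simps)

lemma incircle_vertex:
  "incircle a b c a = 0" "incircle a b c b = 0" "incircle a b c c = 0"
  unfolding incircle_def Let_def by (simp_all add: algebra_simps power2_eq_square)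

lemma incircle_rot: "incircle b c a d = incircle a b c d"
  unfolding incircle_def Let_def by (simp add: algebra_simps)

lemma orient_rot: "orient b c a = orient a b c"
  unfolding orient_def by (simp add: algebra_simps)

lemma orient_swap: "orient a c b = - orient a b c"
  unfolding orient_def by (simp add: algebra_simps)

lemma incircle_swap: "incircle a c b d = - incircle a b c d"
  unfolding incircle_def Let_def by (simp add: algebra_simps)

lemma orient_degen: "orient a a b = 0" "orient a b a = 0" "orient a b b = 0"
  unfolding orient_def by (simp_all add: algebra_simps)

lemma comb:
  assumes "l1 + l2 + l3 = 1"
    and "z = (l1 * fst u1 + l2 * fst u2 + l3 * fst u3, l1 * snd u1 + l2 * snd u2 + l3 * snd u3)"
  shows "l1 * incircle a b c u1 + l2 * incircle a b c u2 + l3 * incircle a b c u3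
         = incircle a b c z - orient a b c * (l1 * LL u1 + l2 * LL u2 + l3 * LL u3 - LL z)"
proof -
  have l3: "l3 = 1 - l1 - l2" using assms(1) by simp
  show ?thesis unfolding incircle_affine[of a b c] using assms(2)
    by (simp add: l3 algebra_simps)
qed


lemma orient_pos_distinct: "orient a b c > 0 \<Longrightarrow> distinct [a,b,c]"
  using orient_degen by (auto simp: orient_def)

lemma nonpos_sum3_zero:
  fixes x1 x2 x3 :: real
  assumes "x1 \<le> 0" "x2 \<le> 0" "x3 \<le> 0" "x1 + x2 + x3 = 0"
  shows "x1 = 0" "x2 = 0" "x3 = 0"
  using assms by linarith+

lemma key_overlap:
  assumes gp: "general_position S"
    and S: "a \<in> S" "b \<in> S" "c \<in> S" "a' \<in> S" "b' \<in> S" "c' \<in> S"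
    and o1: "orient a b c > 0" and o2: "orient a' b' c' > 0"
    and d1: "\<forall>d\<in>S. incircle a b c d \<le> 0" and d2: "\<forall>d\<in>S. incircle a' b' c' d \<le> 0"
    and l: "l1 > 0" "l2 > 0" "l3 > 0" "l1 + l2 + l3 = 1"
    and m: "m1 \<ge> 0" "m2 \<ge> 0" "m3 \<ge> 0" "m1 + m2 + m3 = 1"
    and z1: "z = (l1 * fst a + l2 * fst b + l3 * fst c, l1 * snd a + l2 * snd b + l3 * snd c)"
    and z2: "z = (m1 * fst a' + m2 * fst b' + m3 * fst c', m1 * snd a' + m2 * snd b' + m3 * snd c')"
  shows "{a, b, c} \<subseteq> {a', b', c'}"
proof -
  define Q where "Q = l1 * LL a + l2 * LL b + l3 * LL c - LL z"
  define Q' where "Q' = m1 * LL a' + m2 * LL b' + m3 * LL c' - LL z"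
  let ?f1 = "incircle a b c" and ?f2 = "incircle a' b' c'"
  have e1: "l1 * ?f2 a + l2 * ?f2 b + l3 * ?f2 c = ?f2 z - orient a' b' c' * Q"
    unfolding Q_def by (rule comb[OF l(4) z1])
  have e2: "m1 * ?f2 a' + m2 * ?f2 b' + m3 * ?f2 c' = ?f2 z - orient a' b' c' * Q'"
    unfolding Q'_def by (rule comb[OF m(4) z2])
  have e3: "m1 * ?f1 a' + m2 * ?f1 b' + m3 * ?f1 c' = ?f1 z - orient a b c * Q'"
    unfolding Q'_def by (rule comb[OF m(4) z2])
  have e4: "l1 * ?f1 a + l2 * ?f1 b + l3 * ?f1 c = ?f1 z - orient a b c * Q"
    unfolding Q_def by (rule comb[OF l(4) z1])
  have v2: "?f2 z = orient a' b' c' * Q'" using e2 by (simp add: incircle_vertex)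
  have v1: "?f1 z = orient a b c * Q" using e4 by (simp add: incircle_vertex)
  have t1: "l1 * ?f2 a \<le> 0" "l2 * ?f2 b \<le> 0" "l3 * ?f2 c \<le> 0"
    using d2 S l by (auto intro: mult_nonneg_nonpos)
  have t2: "m1 * ?f1 a' \<le> 0" "m2 * ?f1 b' \<le> 0" "m3 * ?f1 c' \<le> 0"
    using d1 S m by (auto intro: mult_nonneg_nonpos)
  have "orient a' b' c' * (Q' - Q) \<le> 0" using e1 v2 t1 by (simp add: algebra_simps)
  hence q1: "Q' \<le> Q" using o2 by (simp add: mult_le_0_iff)
  have "orient a b c * (Q - Q') \<le> 0" using e3 v1 t2 by (simp add: algebra_simps)
  hence q2: "Q \<le> Q'" using o1 by (simp add: mult_le_0_iff)
  have s0: "l1 * ?f2 a + l2 * ?f2 b + l3 * ?f2 c = 0" using e1 v2 q1 q2 by simp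
  have z: "l1 * ?f2 a = 0" "l2 * ?f2 b = 0" "l3 * ?f2 c = 0"
    using nonpos_sum3_zero[OF t1 s0] by auto
  hence z': "?f2 a = 0" "?f2 b = 0" "?f2 c = 0" using l by auto
  have dist: "distinct [a', b', c']" using orient_pos_distinct[OF o2] .
  have gp4: "\<And>u. u \<in> S \<Longrightarrow> ?f2 u = 0 \<Longrightarrow> u \<in> {a', b', c'}"
  proof (rule ccontr)
    fix u assume "u \<in> S" "?f2 u = 0" "u \<notin> {a', b', c'}"
    hence "distinct [a', b', c', u]" using dist by auto
    thus False using gp S \<open>u \<in> S\<close> \<open>?f2 u = 0\<close> unfolding general_position_def by blast
  qed
  show ?thesis using gp4 z' S by auto
qed


definition lexlt :: "pt \<Rightarrow> pt \<Rightarrow> bool" where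
  "lexlt p q \<longleftrightarrow> fst p < fst q \<or> (fst p = fst q \<and> snd p < snd q)"

lemma ev_pos:
  fixes A B :: real
  assumes "A > 0 \<or> (A = 0 \<and> B > 0)"
  shows "\<exists>d0>0. \<forall>d. 0 < d \<and> d < d0 \<longrightarrow> A + B * d > 0"
proof (cases "B \<ge> 0")
  case True
  show ?thesis
  proof (intro exI[of _ 1] conjI allI impI)
    fix d :: real assume "0 < d \<and> d < 1"
    thus "A + B * d > 0" using assms True
      by (smt (verit) mult_nonneg_nonneg mult_pos_pos)
  qed simp
next
  case False
  hence A: "A > 0" using assms by auto
  show ?thesis
  proof (intro exI[of _ "A / (- B)"] conjI allI impI)
    show "A / (- B) > 0" using A False by (intro divide_pos_pos) auto
    fix d :: real assume d: "0 < d \<and> d < A / (- B)"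
    have nb: "- B > 0" using False by simp
    have "d < A / (- B)" using d by blast
    hence "d * (- B) < A" using pos_less_divide_eq[OF nb] by blast
    thus "A + B * d > 0" by (simp add: algebra_simps)
  qed
qed

lemma ev_pos4:
  fixes A1 B1 A2 B2 A3 B3 A4 B4 :: real
  assumes "A1 > 0 \<or> (A1 = 0 \<and> B1 > 0)" "A2 > 0 \<or> (A2 = 0 \<and> B2 > 0)"
          "A3 > 0 \<or> (A3 = 0 \<and> B3 > 0)" "A4 > 0 \<or> (A4 = 0 \<and> B4 > 0)"
  shows "\<exists>d>0. A1 + B1 * d > 0 \<and> A2 + B2 * d > 0 \<and> A3 + B3 * d > 0 \<and> A4 + B4 * d > 0"
proof -
  obtain e1 where e1: "e1 > 0" "\<forall>d. 0 < d \<and> d < e1 \<longrightarrow> A1 + B1 * d > 0" using ev_pos[OF assms(1)] by blast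
  obtain e2 where e2: "e2 > 0" "\<forall>d. 0 < d \<and> d < e2 \<longrightarrow> A2 + B2 * d > 0" using ev_pos[OF assms(2)] by blast
  obtain e3 where e3: "e3 > 0" "\<forall>d. 0 < d \<and> d < e3 \<longrightarrow> A3 + B3 * d > 0" using ev_pos[OF assms(3)] by blast
  obtain e4 where e4: "e4 > 0" "\<forall>d. 0 < d \<and> d < e4 \<longrightarrow> A4 + B4 * d > 0" using ev_pos[OF assms(4)] by blast
  define d where "d = min (min e1 e2) (min e3 e4) / 2"
  have "d > 0" "d < e1" "d < e2" "d < e3" "d < e4" using e1 e2 e3 e4 by (auto simp: d_def min_def)
  thus ?thesis using e1 e2 e3 e4 by blast
qed

lemma bary:
  assumes o: "orient v a b > 0"
    and k1: "k1 = (fst a - fst v) * w2 - (snd a - snd v) * w1" "k1 > 0"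
    and k2: "k2 = w1 * (snd b - snd v) - w2 * (fst b - fst v)" "k2 > 0"
    and t: "t > 0" "t * (k1 + k2) / orient v a b < 1"
  shows "\<exists>l1 l2 l3. l1 > 0 \<and> l2 > 0 \<and> l3 > 0 \<and> l1 + l2 + l3 = 1 \<and>
     (fst v + t * w1, snd v + t * w2) =
       (l1 * fst v + l2 * fst a + l3 * fst b, l1 * snd v + l2 * snd a + l3 * snd b)"
proof -
  let ?o = "orient v a b"
  define l2 where "l2 = t * k2 / ?o"
  define l3 where "l3 = t * k1 / ?o"
  define l1 where "l1 = 1 - l2 - l3"
  have p: "l2 > 0" "l3 > 0" using o k1 k2 t by (auto simp: l2_def l3_def)
  have "l2 + l3 = t * (k1 + k2) / ?o" by (simp add: l2_def l3_def add_divide_distrib algebra_simps)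
  hence p1: "l1 > 0" using t by (simp add: l1_def)
  have idw: "k2 * (fst a - fst v) + k1 * (fst b - fst v) = ?o * w1"
            "k2 * (snd a - snd v) + k1 * (snd b - snd v) = ?o * w2"
    unfolding k1 k2 orient_def by (simp_all add: algebra_simps)
  have "l1 * fst v + l2 * fst a + l3 * fst b = fst v + (t / ?o) * (k2 * (fst a - fst v) + k1 * (fst b - fst v))"
    by (simp add: l1_def l2_def l3_def algebra_simps)
  also have "\<dots> = fst v + t * w1" using idw(1) o by simp
  finally have x: "l1 * fst v + l2 * fst a + l3 * fst b = fst v + t * w1" .
  have "l1 * snd v + l2 * snd a + l3 * snd b = snd v + (t / ?o) * (k2 * (snd a - snd v) + k1 * (snd b - snd v))"
    by (simp add: l1_def l2_def l3_def algebra_simps)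
  also have "\<dots> = snd v + t * w2" using idw(2) o by simp
  finally have y: "l1 * snd v + l2 * snd a + l3 * snd b = snd v + t * w2" .
  show ?thesis using p p1 x y by (intro exI[of _ l1] exI[of _ l2] exI[of _ l3]) (simp add: l1_def)
qed

lemma common_point_unique:
  assumes gp: "general_position S"
    and S: "v \<in> S" "a \<in> S" "b \<in> S" "a' \<in> S" "b' \<in> S"
    and o1: "orient v a b > 0" and o2: "orient v a' b' > 0"
    and d1: "\<forall>d\<in>S. incircle v a b d \<le> 0" and d2: "\<forall>d\<in>S. incircle v a' b' d \<le> 0"
    and k: "(fst a - fst v) * w2 - (snd a - snd v) * w1 > 0"
           "w1 * (snd b - snd v) - w2 * (fst b - fst v) > 0"
           "(fst a' - fst v) * w2 - (snd a' - snd v) * w1 > 0"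
           "w1 * (snd b' - snd v) - w2 * (fst b' - fst v) > 0"
  shows "{v, a, b} = {v, a', b'}"
proof -
  define k1 where "k1 = (fst a - fst v) * w2 - (snd a - snd v) * w1"
  define k2 where "k2 = w1 * (snd b - snd v) - w2 * (fst b - fst v)"
  define k1' where "k1' = (fst a' - fst v) * w2 - (snd a' - snd v) * w1"
  define k2' where "k2' = w1 * (snd b' - snd v) - w2 * (fst b' - fst v)"
  define t where "t = 1 / (1 + (k1 + k2) / orient v a b + (k1' + k2') / orient v a' b')"
  have pos: "k1 > 0" "k2 > 0" "k1' > 0" "k2' > 0" using k by (simp_all add: k1_def k2_def k1'_def k2'_def)
  have q1: "(k1 + k2) / orient v a b > 0" "(k1' + k2') / orient v a' b' > 0" using pos o1 o2 by auto
  have t0: "t > 0" using q1 by (simp add: t_def)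
  have aux: "\<And>X Y::real. X > 0 \<Longrightarrow> Y > 0 \<Longrightarrow> X / (1 + X + Y) < 1 \<and> Y / (1 + X + Y) < 1"
    by (simp add: divide_less_eq)
  have tl1: "t * (k1 + k2) / orient v a b < 1"
    using aux[OF q1] by (simp add: t_def mult.commute)
  have tl2: "t * (k1' + k2') / orient v a' b' < 1"
    using aux[OF q1] by (simp add: t_def mult.commute)
  obtain l1 l2 l3 where L: "l1 > 0" "l2 > 0" "l3 > 0" "l1 + l2 + l3 = 1"
     "(fst v + t * w1, snd v + t * w2) = (l1 * fst v + l2 * fst a + l3 * fst b, l1 * snd v + l2 * snd a + l3 * snd b)"
    using bary[OF o1 k1_def _ k2_def _ t0 tl1] pos by blast
  obtain m1 m2 m3 where M: "m1 > 0" "m2 > 0" "m3 > 0" "m1 + m2 + m3 = 1"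
     "(fst v + t * w1, snd v + t * w2) = (m1 * fst v + m2 * fst a' + m3 * fst b', m1 * snd v + m2 * snd a' + m3 * snd b')"
    using bary[OF o2 k1'_def _ k2'_def _ t0 tl2] pos by blast
  have Mw: "m1 \<ge> 0" "m2 \<ge> 0" "m3 \<ge> 0" and Lw: "l1 \<ge> 0" "l2 \<ge> 0" "l3 \<ge> 0"
    using L M by auto
  have "{v, a, b} \<subseteq> {v, a', b'}"
    by (rule key_overlap[OF gp S(1,2,3,1,4,5) o1 o2 d1 d2 L(1-4) Mw M(4) L(5) M(5)])
  moreover have "{v, a', b'} \<subseteq> {v, a, b}"
    by (rule key_overlap[OF gp S(1,4,5,1,2,3) o2 o1 d2 d1 M(1-4) Lw L(4) M(5) L(5)])
  ultimately show ?thesis by blast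
qed

lemma unique_up:
  assumes gp: "general_position S"
    and S: "v \<in> S" "a \<in> S" "b \<in> S" "a' \<in> S" "b' \<in> S"
    and o1: "orient v a b > 0" and o2: "orient v a' b' > 0"
    and d1: "\<forall>d\<in>S. incircle v a b d \<le> 0" and d2: "\<forall>d\<in>S. incircle v a' b' d \<le> 0"
    and lx: "lexlt a v" "lexlt v b" "lexlt a' v" "lexlt v b'"
  shows "{v, a, b} = {v, a', b'}"
proof -
  obtain d :: real where d: "d > 0"
    "- (fst a - fst v) + - (snd a - snd v) * d > 0"
    "(fst b - fst v) + (snd b - snd v) * d > 0"
    "- (fst a' - fst v) + - (snd a' - snd v) * d > 0"
    "(fst b' - fst v) + (snd b' - snd v) * d > 0"
    using ev_pos4[of "- (fst a - fst v)" "- (snd a - snd v)" "(fst b - fst v)" "(snd b - snd v)"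
                     "- (fst a' - fst v)" "- (snd a' - snd v)" "(fst b' - fst v)" "(snd b' - snd v)"]
      lx unfolding lexlt_def by auto
  show ?thesis
    by (rule common_point_unique[OF gp S o1 o2 d1 d2, of "-1" d]) (use d in \<open>simp_all add: algebra_simps\<close>)
qed

lemma unique_down:
  assumes gp: "general_position S"
    and S: "v \<in> S" "a \<in> S" "b \<in> S" "a' \<in> S" "b' \<in> S"
    and o1: "orient v a b > 0" and o2: "orient v a' b' > 0"
    and d1: "\<forall>d\<in>S. incircle v a b d \<le> 0" and d2: "\<forall>d\<in>S. incircle v a' b' d \<le> 0"
    and lx: "lexlt b v" "lexlt v a" "lexlt b' v" "lexlt v a'"
  shows "{v, a, b} = {v, a', b'}"
proof -
  obtain d :: real where d: "d > 0"
    "(fst a - fst v) + (snd a - snd v) * d > 0"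
    "- (fst b - fst v) + - (snd b - snd v) * d > 0"
    "(fst a' - fst v) + (snd a' - snd v) * d > 0"
    "- (fst b' - fst v) + - (snd b' - snd v) * d > 0"
    using ev_pos4[of "(fst a - fst v)" "(snd a - snd v)" "- (fst b - fst v)" "- (snd b - snd v)"
                     "(fst a' - fst v)" "(snd a' - snd v)" "- (fst b' - fst v)" "- (snd b' - snd v)"]
      lx unfolding lexlt_def by auto
  show ?thesis
    by (rule common_point_unique[OF gp S o1 o2 d1 d2, of 1 "-d"]) (use d in \<open>simp_all add: algebra_simps\<close>)
qed


lemma lexlt_total: "p \<noteq> q \<Longrightarrow> lexlt p q \<or> lexlt q p"
  unfolding lexlt_def by (cases p; cases q) auto
lemma lexlt_trans: "lexlt p q \<Longrightarrow> lexlt q r \<Longrightarrow> lexlt p r"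
  unfolding lexlt_def by auto
lemma lexlt_asym: "lexlt p q \<Longrightarrow> \<not> lexlt q p"
  unfolding lexlt_def by auto

lemma median_rot:
  assumes "distinct [a, b, c]"
  shows "\<exists>v x y. (v, x, y) \<in> {(a, b, c), (b, c, a), (c, a, b)} \<and>
           ((lexlt x v \<and> lexlt v y) \<or> (lexlt y v \<and> lexlt v x))"
proof -
  have t: "lexlt a b \<or> lexlt b a" "lexlt b c \<or> lexlt c b" "lexlt a c \<or> lexlt c a"
    using assms lexlt_total by auto
  show ?thesis using t lexlt_trans lexlt_asym by blast
qed

definition dkey :: "pt set \<Rightarrow> pt set \<Rightarrow> pt \<times> bool" where
  "dkey S T = (SOME k. \<exists>x y. T = {fst k, x, y} \<and> fst k \<in> S \<and> x \<in> S \<and> y \<in> S \<and>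
      orient (fst k) x y > 0 \<and> (\<forall>d\<in>S. incircle (fst k) x y d \<le> 0) \<and>
      (if snd k then lexlt x (fst k) \<and> lexlt (fst k) y else lexlt y (fst k) \<and> lexlt (fst k) x))"

lemma dkey_ex:
  assumes "T \<in> delaunay_triangles S"
  shows "\<exists>k. \<exists>x y. T = {fst k, x, y} \<and> fst k \<in> S \<and> x \<in> S \<and> y \<in> S \<and>
      orient (fst k) x y > 0 \<and> (\<forall>d\<in>S. incircle (fst k) x y d \<le> 0) \<and>
      (if snd k then lexlt x (fst k) \<and> lexlt (fst k) y else lexlt y (fst k) \<and> lexlt (fst k) x)"
proof -
  obtain a b c where T: "T = {a, b, c}" "a \<in> S" "b \<in> S" "c \<in> S" "orient a b c > 0"
      "\<forall>d\<in>S. \<not> incircle a b c d > 0"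
    using assms unfolding delaunay_triangles_def by blast
  obtain v x y where r: "(v, x, y) \<in> {(a, b, c), (b, c, a), (c, a, b)}"
      "(lexlt x v \<and> lexlt v y) \<or> (lexlt y v \<and> lexlt v x)"
    using median_rot[OF orient_pos_distinct[OF T(5)]] by blast
  have P: "T = {v, x, y} \<and> v \<in> S \<and> x \<in> S \<and> y \<in> S \<and> orient v x y > 0 \<and> (\<forall>d\<in>S. incircle v x y d \<le> 0)"
    using r(1) T by (auto simp: orient_rot incircle_rot not_less)
  show ?thesis
  proof (cases "lexlt x v \<and> lexlt v y")
    case True thus ?thesis using P
      by (intro exI[of _ "(v, True)"]) (simp only: fst_conv snd_conv if_True, blast)
  next
    case False thus ?thesis using P r(2)
      by (intro exI[of _ "(v, False)"]) (simp only: fst_conv snd_conv if_False, blast)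
  qed
qed

lemma card_delaunay:
  assumes fin: "finite S" and gp: "general_position S"
  shows "card (delaunay_triangles S) \<le> 2 * card S"
proof -
  let ?P = "\<lambda>T k. \<exists>x y. T = {fst k, x, y} \<and> fst k \<in> S \<and> x \<in> S \<and> y \<in> S \<and>
      orient (fst k) x y > 0 \<and> (\<forall>d\<in>S. incircle (fst k) x y d \<le> 0) \<and>
      (if snd k then lexlt x (fst k) \<and> lexlt (fst k) y else lexlt y (fst k) \<and> lexlt (fst k) x)"
  have K: "\<And>T. T \<in> delaunay_triangles S \<Longrightarrow> ?P T (dkey S T)"
    unfolding dkey_def by (rule someI_ex, rule dkey_ex)
  have inj: "inj_on (dkey S) (delaunay_triangles S)"
  proof (rule inj_onI)
    fix T1 T2 assume T1: "T1 \<in> delaunay_triangles S" and T2: "T2 \<in> delaunay_triangles S"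
      and eq: "dkey S T1 = dkey S T2"
    obtain v tp where k: "dkey S T1 = (v, tp)" by fastforce
    have k1: "?P T1 (v, tp)" using K[OF T1] unfolding k .
    have k2: "?P T2 (v, tp)" using K[OF T2] unfolding eq[symmetric] k .
    obtain x y where 1: "T1 = {v, x, y}" "v \<in> S" "x \<in> S" "y \<in> S" "orient v x y > 0"
        "\<forall>d\<in>S. incircle v x y d \<le> 0"
        "if tp then lexlt x v \<and> lexlt v y else lexlt y v \<and> lexlt v x"
      using k1 unfolding fst_conv snd_conv by blast
    obtain x' y' where 2: "T2 = {v, x', y'}" "x' \<in> S" "y' \<in> S" "orient v x' y' > 0"
        "\<forall>d\<in>S. incircle v x' y' d \<le> 0"
        "if tp then lexlt x' v \<and> lexlt v y' else lexlt y' v \<and> lexlt v x'"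
      using k2 unfolding fst_conv snd_conv by blast
    show "T1 = T2"
    proof (cases tp)
      case True
      thus ?thesis using unique_up[OF gp 1(2,3,4) 2(2,3) 1(5) 2(4) 1(6) 2(5)] 1(1,7) 2(1,6) by auto
    next
      case False
      thus ?thesis using unique_down[OF gp 1(2,3,4) 2(2,3) 1(5) 2(4) 1(6) 2(5)] 1(1,7) 2(1,6) by auto
    qed
  qed
  have sub: "dkey S ` delaunay_triangles S \<subseteq> S \<times> UNIV"
  proof
    fix k assume "k \<in> dkey S ` delaunay_triangles S"
    then obtain T where "T \<in> delaunay_triangles S" "k = dkey S T" by blast
    hence "fst k \<in> S" using K by blast
    thus "k \<in> S \<times> UNIV" by (cases k) simp
  qed
  have "card (delaunay_triangles S) = card (dkey S ` delaunay_triangles S)"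
    using card_image[OF inj] by simp
  also have "\<dots> \<le> card (S \<times> (UNIV :: bool set))"
    by (rule card_mono[OF _ sub]) (use fin in simp)
  also have "\<dots> = 2 * card S" by (simp add: card_cartesian_product mult.commute)
  finally show ?thesis .
qed

lemma card_hull:
  assumes fin: "finite S" and gp: "general_position S"
  shows "card (hull_edges S) \<le> card S"
proof -
  have inj: "inj_on fst (hull_edges S)"
  proof (rule inj_onI)
    fix e1 e2 assume e1: "e1 \<in> hull_edges S" and e2: "e2 \<in> hull_edges S" and eq: "fst e1 = fst e2"
    obtain a b where 1: "e1 = (a, b)" "a \<in> S" "b \<in> S" "a \<noteq> b" "\<forall>d\<in>S. orient a b d \<ge> 0"
      using e1 unfolding hull_edges_def by blast
    obtain b' where 2: "e2 = (a, b')" "b' \<in> S" "a \<noteq> b'" "\<forall>d\<in>S. orient a b' d \<ge> 0"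
      using e2 eq 1 unfolding hull_edges_def by auto
    show "e1 = e2"
    proof (rule ccontr)
      assume "e1 \<noteq> e2"
      hence "distinct [a, b, b']" using 1 2 by auto
      hence "orient a b b' \<noteq> 0" using gp 1 2 unfolding general_position_def by blast
      moreover have "orient a b b' \<ge> 0" "orient a b' b \<ge> 0" using 1 2 by auto
      ultimately show False using orient_swap[of a b' b] by simp
    qed
  qed
  have "card (hull_edges S) = card (fst ` hull_edges S)" using card_image[OF inj] by simp
  also have "\<dots> \<le> card S" by (rule card_mono[OF fin]) (auto simp: hull_edges_def)
  finally show ?thesis .
qed

lemma finite_DT: "finite S \<Longrightarrow> finite (DT S)"
proof -
  assume fin: "finite S"
  have "delaunay_triangles S \<subseteq> (\<lambda>(a, b, c). {a, b, c}) ` (S \<times> S \<times> S)"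
    unfolding delaunay_triangles_def by force
  hence f1: "finite (delaunay_triangles S)" using fin by (meson finite_SigmaI finite_imageI finite_subset)
  have "hull_edges S \<subseteq> S \<times> S" unfolding hull_edges_def by auto
  hence f2: "finite (hull_edges S)" using fin by (meson finite_SigmaI finite_subset)
  show ?thesis unfolding DT_def using f1 f2 by simp
qed

lemma card_DT:
  assumes fin: "finite S" and gp: "general_position S"
  shows "card (DT S) \<le> 3 * card S"
proof -
  have "delaunay_triangles S \<subseteq> (\<lambda>(a, b, c). {a, b, c}) ` (S \<times> S \<times> S)"
    unfolding delaunay_triangles_def by force
  hence f1: "finite (delaunay_triangles S)" using fin by (meson finite_SigmaI finite_imageI finite_subset)
  have "card (DT S) \<le> card (Tri ` delaunay_triangles S) + card ((\<lambda>(a, b). HEdge a b) ` hull_edges S)"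
    unfolding DT_def by (rule card_Un_le)
  also have "\<dots> \<le> card (delaunay_triangles S) + card (hull_edges S)"
    by (intro add_mono card_image_le) (use f1 fin in \<open>auto intro: finite_subset[of _ "S \<times> S"] simp: hull_edges_def\<close>)
  also have "\<dots> \<le> 2 * card S + card S"
    using card_delaunay[OF fin gp] card_hull[OF fin gp] by linarith
  finally show ?thesis by simp
qed



lemma count_avoid:
  assumes "finite A" "K \<subseteq> A"
  shows "real (card {xs \<in> permutations_of_set A. set (take j xs) \<inter> K = {}})
         \<le> (1 - real (card K) / real (card A)) ^ j * fact (card A)"
  using assms
proof (induction j arbitrary: A)
  case 0
  thus ?case by simp
next
  case (Suc j)
  show ?case
  proof (cases "A = {}")
    case True
    hence "K = {}" using Suc.prems by auto
    thus ?thesis using True by simp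
  next
    case ne: False
    let ?m = "card A" and ?k = "card K"
    let ?F = "\<lambda>B. {ys \<in> permutations_of_set B. set (take j ys) \<inter> K = {}}"
    have m1: "?m \<ge> 1" using ne Suc.prems(1) by (simp add: Suc_leI card_gt_0_iff)
    have sub: "{xs \<in> permutations_of_set A. set (take (Suc j) xs) \<inter> K = {}}
               \<subseteq> (\<Union>x\<in>A - K. (\<lambda>ys. x # ys) ` ?F (A - {x}))"
    proof
      fix xs assume xs: "xs \<in> {xs \<in> permutations_of_set A. set (take (Suc j) xs) \<inter> K = {}}"
      then obtain x ys where x: "x \<in> A" "ys \<in> permutations_of_set (A - {x})" "xs = x # ys"
        using permutations_of_set_nonempty[OF ne] by auto
      have "x \<notin> K" "set (take j ys) \<inter> K = {}" using xs x(3) by auto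
      thus "xs \<in> (\<Union>x\<in>A - K. (\<lambda>ys. x # ys) ` ?F (A - {x}))" using x by blast
    qed
    have finU: "finite (A - K)" using Suc.prems by simp
    have "real (card {xs \<in> permutations_of_set A. set (take (Suc j) xs) \<inter> K = {}})
          \<le> real (card (\<Union>x\<in>A - K. (\<lambda>ys. x # ys) ` ?F (A - {x})))"
      by (intro of_nat_mono card_mono[OF _ sub]) (use finU in auto)
    also have "\<dots> \<le> real (\<Sum>x\<in>A - K. card ((\<lambda>ys. x # ys) ` ?F (A - {x})))"
      by (intro of_nat_mono card_UN_le finU)
    also have "\<dots> \<le> (\<Sum>x\<in>A - K. real (card (?F (A - {x}))))"
      unfolding of_nat_sum by (intro sum_mono of_nat_mono card_image_le) simp
    also have "\<dots> \<le> (\<Sum>x\<in>A - K. (1 - real ?k / real (?m - 1)) ^ j * fact (?m - 1))"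
    proof (rule sum_mono)
      fix x assume x: "x \<in> A - K"
      have "real (card (?F (A - {x}))) \<le> (1 - real ?k / real (card (A - {x}))) ^ j * fact (card (A - {x}))"
        using Suc.IH[of "A - {x}"] Suc.prems x by auto
      thus "real (card (?F (A - {x}))) \<le> (1 - real ?k / real (?m - 1)) ^ j * fact (?m - 1)"
        using x Suc.prems by (simp add: card_Diff_singleton)
    qed
    also have "\<dots> = real (?m - ?k) * ((1 - real ?k / real (?m - 1)) ^ j * fact (?m - 1))"
      using Suc.prems by (simp add: card_Diff_subset finite_subset)
    also have "\<dots> \<le> (1 - real ?k / real ?m) ^ Suc j * fact ?m"
    proof (cases "?k < ?m")
      case False
      hence "?m - ?k = 0" by simp
      moreover have "?k \<le> ?m" using Suc.prems card_mono by blast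
      ultimately show ?thesis using False by simp
    next
      case True
      have km: "real ?k \<le> real (?m - 1)" using True by simp
      have base: "1 - real ?k / real (?m - 1) \<le> 1 - real ?k / real ?m"
      proof (cases "?m - 1 = 0")
        case True thus ?thesis using km by simp
      next
        case False
        hence "real ?k / real ?m \<le> real ?k / real (?m - 1)"
          by (intro divide_left_mono) (use m1 in auto)
        thus ?thesis by simp
      qed
      have nn: "0 \<le> 1 - real ?k / real (?m - 1)"
      proof (cases "?m - 1 = 0")
        case True thus ?thesis by simp
      next
        case False thus ?thesis using km by (simp add: divide_le_eq)
      qed
      have pw: "(1 - real ?k / real (?m - 1)) ^ j \<le> (1 - real ?k / real ?m) ^ j"
        by (rule power_mono[OF base nn])
      have fm: "fact ?m = real ?m * fact (?m - 1)"
        using m1 by (simp add: fact_reduce)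
      have eq: "real (?m - ?k) * fact (?m - 1) = (1 - real ?k / real ?m) * fact ?m"
      proof -
        have a: "(1 - real ?k / real ?m) * real ?m = real ?m - real ?k" using m1 by (simp add: field_simps)
        have "(1 - real ?k / real ?m) * fact ?m = ((1 - real ?k / real ?m) * real ?m) * fact (?m - 1)"
          unfolding fm by (simp only: mult.assoc)
        also have "\<dots> = real (?m - ?k) * fact (?m - 1)" unfolding a using True by (simp add: of_nat_diff)
        finally show ?thesis by simp
      qed
      have "real (?m - ?k) * ((1 - real ?k / real (?m - 1)) ^ j * fact (?m - 1))
            \<le> real (?m - ?k) * ((1 - real ?k / real ?m) ^ j * fact (?m - 1))"
        by (intro mult_left_mono mult_right_mono pw) auto
      also have "\<dots> = (1 - real ?k / real ?m) ^ j * (real (?m - ?k) * fact (?m - 1))" by simp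
      also have "\<dots> = (1 - real ?k / real ?m) ^ Suc j * fact ?m" unfolding eq by simp
      finally show ?thesis .
    qed
    finally show ?thesis .
  qed
qed

lemma count_avoid_exp:
  assumes "finite A" "K \<subseteq> A" "A \<noteq> {}"
  shows "real (card {xs \<in> permutations_of_set A. set (take j xs) \<inter> K = {}})
         \<le> exp (- real (card K) * real j / real (card A)) * fact (card A)"
proof -
  have m: "card A > 0" using assms by (simp add: card_gt_0_iff)
  have k: "card K \<le> card A" using assms card_mono by blast
  have "(1 - real (card K) / real (card A)) ^ j \<le> exp (- (real (card K) / real (card A))) ^ j"
    using exp_ge_add_one_self[of "- (real (card K) / real (card A))"]
    by (intro power_mono) (use k m in \<open>auto simp: divide_le_eq\<close>)
  also have "\<dots> = exp (- real (card K) * real j / real (card A))"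
    by (simp add: exp_of_nat_mult[symmetric] algebra_simps)
  finally show ?thesis using count_avoid[OF assms(1,2), of j]
    by (smt (verit) fact_ge_zero mult_right_mono)
qed



lemma tri_rep0:
  assumes eq: "{a, b, c} = {a, b', c'}" and d: "distinct [a, b, c]" and d': "distinct [a, b', c']"
    and o: "orient a b c > 0" and o': "orient a b' c' > 0"
  shows "b' = b \<and> c' = c"
proof -
  have "{b, c} = {a, b, c} - {a}" using d by auto
  also have "\<dots> = {a, b', c'} - {a}" using eq by simp
  also have "\<dots> = {b', c'}" using d' by auto
  finally have "(b = b' \<and> c = c') \<or> (b = c' \<and> c = b')" by (simp add: doubleton_eq_iff)
  moreover have "\<not> (b = c' \<and> c = b')"
  proof
    assume "b = c' \<and> c = b'"
    hence "orient a c b > 0" using o' by simp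
    thus False using o orient_swap[of a b c] by simp
  qed
  ultimately show ?thesis by blast
qed

lemma tri_rep:
  assumes eq: "{a, b, c} = {a', b', c'}" and o: "orient a b c > 0" and o': "orient a' b' c' > 0"
  shows "incircle a' b' c' q = incircle a b c q"
proof -
  have d: "distinct [a, b, c]" using orient_pos_distinct[OF o] .
  have d': "distinct [a', b', c']" using orient_pos_distinct[OF o'] .
  have "a' \<in> {a, b, c}" using eq by blast
  moreover {
    assume "a' = a"
    hence "b' = b \<and> c' = c" using tri_rep0[of a b c b' c'] eq d d' o o' by simp
    hence ?thesis using \<open>a' = a\<close> by simp }
  moreover {
    assume "a' = b"
    have "{b, c, a} = {b, b', c'}" using eq \<open>a' = b\<close> by auto
    hence "b' = c \<and> c' = a" using tri_rep0[of b c a b' c'] d d' o o' \<open>a' = b\<close> by (auto simp: orient_rot)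
    hence ?thesis using \<open>a' = b\<close> by (simp add: incircle_rot) }
  moreover {
    assume "a' = c"
    have "{c, a, b} = {c, b', c'}" using eq \<open>a' = c\<close> by auto
    hence "b' = a \<and> c' = b" using tri_rep0[of c a b b' c'] d d' o o' \<open>a' = c\<close> by (auto simp: orient_rot)
    hence ?thesis using \<open>a' = c\<close> by (metis incircle_rot) }
  ultimately show ?thesis by blast
qed

lemma no_conflict:
  assumes "t \<in> DT S" "q \<in> S"
  shows "\<not> in_conflict t q"
proof
  assume ic: "in_conflict t q"
  show False
  proof (cases t)
    case (Tri T)
    then obtain a b c where T: "T = {a, b, c}" "orient a b c > 0" "\<forall>d\<in>S. \<not> incircle a b c d > 0"
      using assms(1) unfolding DT_def delaunay_triangles_def by auto
    obtain a' b' c' where T': "T = {a', b', c'}" "orient a' b' c' > 0" "incircle a' b' c' q > 0"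
      using ic Tri by auto
    have "incircle a' b' c' q = incircle a b c q" using tri_rep[of a b c a' b' c'] T T' by simp
    thus False using T T' assms(2) by auto
  next
    case (HEdge a b)
    hence "(a, b) \<in> hull_edges S" using assms(1) unfolding DT_def by auto
    thus False using ic HEdge assms(2) unfolding hull_edges_def by force
  qed
qed



lemma gp_subset: "general_position P \<Longrightarrow> S \<subseteq> P \<Longrightarrow> general_position S"
  unfolding general_position_def by blast

lemma DT_empty: "DT {} = {}"
proof -
  have "delaunay_triangles {} = {}" unfolding delaunay_triangles_def by blast
  moreover have "hull_edges {} = {}" unfolding hull_edges_def by blast
  ultimately show ?thesis unfolding DT_def by simp
qed

definition Cands :: "pt set \<Rightarrow> cfg set" where
  "Cands P = (\<lambda>(a, b, c). Tri {a, b, c}) ` (P \<times> P \<times> P) \<union> (\<lambda>(a, b). HEdge a b) ` (P \<times> P)"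

lemma DT_cands:
  assumes S: "S \<subseteq> P" shows "DT S \<subseteq> Cands P"
proof
  fix t assume "t \<in> DT S"
  then consider T where "t = Tri T" "T \<in> delaunay_triangles S"
    | a b where "t = HEdge a b" "(a, b) \<in> hull_edges S" unfolding DT_def by auto
  thus "t \<in> Cands P"
  proof cases
    case 1
    then obtain a b c where "T = {a, b, c}" "a \<in> S" "b \<in> S" "c \<in> S"
      unfolding delaunay_triangles_def by blast
    hence "t = (\<lambda>(a, b, c). Tri {a, b, c}) (a, b, c)" "(a, b, c) \<in> P \<times> P \<times> P" using 1 S by auto
    thus ?thesis unfolding Cands_def by blast
  next
    case 2
    hence "a \<in> S" "b \<in> S" unfolding hull_edges_def by auto
    hence "t = (\<lambda>(a, b). HEdge a b) (a, b)" "(a, b) \<in> P \<times> P" using 2 S by auto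
    thus ?thesis unfolding Cands_def by blast
  qed
qed

lemma finite_cands: "finite P \<Longrightarrow> finite (Cands P)"
  unfolding Cands_def by simp

lemma card_cands:
  assumes "finite P"
  shows "card (Cands P) \<le> 2 * card P ^ 3"
proof -
  have "card (Cands P) \<le> card ((\<lambda>(a, b, c). Tri {a, b, c}) ` (P \<times> P \<times> P)) + card ((\<lambda>(a, b). HEdge a b) ` (P \<times> P))"
    unfolding Cands_def by (rule card_Un_le)
  also have "\<dots> \<le> card (P \<times> P \<times> P) + card (P \<times> P)"
    by (intro add_mono card_image_le) (use assms in auto)
  also have "\<dots> = card P ^ 3 + card P ^ 2" by (simp add: card_cartesian_product power3_eq_cube power2_eq_square)
  also have "\<dots> \<le> 2 * card P ^ 3"
  proof (cases "card P = 0")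
    case False
    hence "card P ^ 2 \<le> card P ^ 3" by (intro power_increasing) auto
    thus ?thesis by simp
  qed simp
  finally show ?thesis .
qed

lemma conflict_sub: "R \<subseteq> P \<Longrightarrow> conflict_list t R \<subseteq> conflict_list t P"
  unfolding conflict_list_def by auto

lemma bad_count:
  assumes fin: "finite P" and n: "card P = n" and gp: "general_position P" and n0: "n > 0"
  shows "real (card {xs \<in> permutations_of_set P. \<exists>t\<in>DT (set (take j xs)).
            real (card (conflict_list t (set (drop j xs)))) > M})
         \<le> real (card (Cands P)) * exp (- M * real j / real n) * fact n"
proof -
  let ?Bad = "{xs \<in> permutations_of_set P. \<exists>t\<in>DT (set (take j xs)).
            real (card (conflict_list t (set (drop j xs)))) > M}"
  let ?G = "{t \<in> Cands P. real (card (conflict_list t P)) > M}"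
  let ?E = "\<lambda>t. {xs \<in> permutations_of_set P. set (take j xs) \<inter> conflict_list t P = {}}"
  have sub: "?Bad \<subseteq> (\<Union>t\<in>?G. ?E t)"
  proof
    fix xs assume xs: "xs \<in> ?Bad"
    then obtain t where t: "t \<in> DT (set (take j xs))" "real (card (conflict_list t (set (drop j xs)))) > M"
      by blast
    have sx: "set xs = P" using xs by (auto dest: permutations_of_setD)
    have s1: "set (take j xs) \<subseteq> P" "set (drop j xs) \<subseteq> P" using sx set_take_subset set_drop_subset by metis+
    have tc: "t \<in> Cands P" using DT_cands[OF s1(1)] t(1) by blast
    have "card (conflict_list t (set (drop j xs))) \<le> card (conflict_list t P)"
      by (rule card_mono[OF _ conflict_sub[OF s1(2)]]) (use fin in \<open>simp add: conflict_list_def\<close>)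
    hence g: "t \<in> ?G" using t(2) tc by simp
    have "set (take j xs) \<inter> conflict_list t P = {}"
      using no_conflict[OF t(1)] unfolding conflict_list_def by auto
    thus "xs \<in> (\<Union>t\<in>?G. ?E t)" using g xs by blast
  qed
  have Pne: "P \<noteq> {}" using n n0 by auto
  have finG: "finite ?G" using finite_cands[OF fin] by simp
  have "real (card ?Bad) \<le> real (card (\<Union>t\<in>?G. ?E t))"
    by (intro of_nat_mono card_mono sub) (use finG in simp)
  also have "\<dots> \<le> real (\<Sum>t\<in>?G. card (?E t))"
    by (intro of_nat_mono card_UN_le finG)
  also have "\<dots> = (\<Sum>t\<in>?G. real (card (?E t)))" by simp
  also have "\<dots> \<le> (\<Sum>t\<in>?G. exp (- M * real j / real n) * fact n)"
  proof (rule sum_mono)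
    fix t assume t: "t \<in> ?G"
    have K: "conflict_list t P \<subseteq> P" unfolding conflict_list_def by auto
    have "real (card (?E t)) \<le> exp (- real (card (conflict_list t P)) * real j / real n) * fact n"
      using count_avoid_exp[OF fin K Pne, of j] n by simp
    also have "\<dots> \<le> exp (- M * real j / real n) * fact n"
    proof -
      have "M * real j \<le> real (card (conflict_list t P)) * real j"
        using t by (intro mult_right_mono) auto
      hence "- real (card (conflict_list t P)) * real j / real n \<le> - M * real j / real n"
        using n0 by (simp add: divide_right_mono)
      thus ?thesis by simp
    qed
    finally show "real (card (?E t)) \<le> exp (- M * real j / real n) * fact n" .
  qed
  also have "\<dots> = real (card ?G) * (exp (- M * real j / real n) * fact n)" by simp
  also have "\<dots> \<le> real (card (Cands P)) * (exp (- M * real j / real n) * fact n)"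
    by (intro mult_right_mono of_nat_mono card_mono) (use finite_cands[OF fin] in auto)
  finally show ?thesis by (simp add: mult.assoc)
qed

lemma work_bound:
  assumes xs: "xs \<in> permutations_of_set P" and fin: "finite P" and n: "card P = n"
    and gp: "general_position P" and i: "1 \<le> i" "i \<le> n"
    and M1: "\<forall>t\<in>DT (set (take i xs)). real (card (conflict_list t (set (drop i xs)))) \<le> M1"
    and M0: "i \<ge> 2 \<longrightarrow> (\<forall>t\<in>DT (set (take (i - 1) xs)). real (card (conflict_list t (set (drop (i - 1) xs)))) \<le> M0)"
    and pos: "M0 \<ge> 0" "M1 \<ge> 0"
  shows "real (stage_work xs i) \<le> 3 * real i * (1 + M1) + 3 * real (i - 1) * (1 + M0)"
proof -
  have sx: "set xs = P" "distinct xs" using xs by (auto dest: permutations_of_setD)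
  have len: "length xs = n" using sx n distinct_card by fastforce
  have cardS: "\<And>k. k \<le> n \<Longrightarrow> card (set (take k xs)) = k"
    using sx(2) len by (simp add: distinct_card)
  have DTk: "\<And>k. k \<le> n \<Longrightarrow> finite (DT (set (take k xs))) \<and> card (DT (set (take k xs))) \<le> 3 * k"
  proof -
    fix k assume k: "k \<le> n"
    have s: "set (take k xs) \<subseteq> P" using sx set_take_subset by metis
    show "finite (DT (set (take k xs))) \<and> card (DT (set (take k xs))) \<le> 3 * k"
      using finite_DT card_DT[OF _ gp_subset[OF gp s]] cardS[OF k] by simp
  qed
  define created where "created = DT (set (take i xs)) - DT (set (take (i - 1) xs))"
  define destroyed where "destroyed = DT (set (take (i - 1) xs)) - DT (set (take i xs))"
  have sw: "stage_work xs i = (\<Sum>t\<in>created. 1 + card (conflict_list t (set (drop i xs)))) +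
         (\<Sum>t\<in>destroyed. 1 + card (conflict_list t (set (drop (i - 1) xs))))"
    unfolding stage_work_def created_def destroyed_def Let_def ..
  have c1: "finite created" "card created \<le> 3 * i"
  proof -
    have "finite (DT (set (take i xs)))" "card (DT (set (take i xs))) \<le> 3 * i" using DTk[OF i(2)] by auto
    thus "finite created" "card created \<le> 3 * i" unfolding created_def
      by (auto intro: le_trans[OF card_mono])
  qed
  have A: "real (\<Sum>t\<in>created. 1 + card (conflict_list t (set (drop i xs)))) \<le> 3 * real i * (1 + M1)"
  proof -
    have "real (\<Sum>t\<in>created. 1 + card (conflict_list t (set (drop i xs))))
          = (\<Sum>t\<in>created. 1 + real (card (conflict_list t (set (drop i xs)))))" by simp
    also have "\<dots> \<le> real (card created) * (1 + M1)"
      by (rule sum_bounded_above) (use M1 in \<open>auto simp: created_def\<close>)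
    also have "\<dots> \<le> 3 * real i * (1 + M1)"
      using c1 pos by (intro mult_right_mono) auto
    finally show ?thesis .
  qed
  have B: "real (\<Sum>t\<in>destroyed. 1 + card (conflict_list t (set (drop (i - 1) xs)))) \<le> 3 * real (i - 1) * (1 + M0)"
  proof (cases "i \<ge> 2")
    case False
    hence "i = 1" using i by simp
    hence "destroyed = {}" unfolding destroyed_def by (simp add: DT_empty)
    thus ?thesis using pos by simp
  next
    case True
    have f: "finite (DT (set (take (i - 1) xs)))" "card (DT (set (take (i - 1) xs))) \<le> 3 * (i - 1)"
      using DTk[of "i - 1"] i by auto
    hence c0: "finite destroyed" "card destroyed \<le> 3 * (i - 1)" unfolding destroyed_def
      by (auto intro: le_trans[OF card_mono])
    have "real (\<Sum>t\<in>destroyed. 1 + card (conflict_list t (set (drop (i - 1) xs))))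
          = (\<Sum>t\<in>destroyed. 1 + real (card (conflict_list t (set (drop (i - 1) xs)))))" by simp
    also have "\<dots> \<le> real (card destroyed) * (1 + M0)"
      by (rule sum_bounded_above) (use M0 True in \<open>auto simp: destroyed_def\<close>)
    also have "\<dots> \<le> 3 * real (i - 1) * (1 + M0)"
    proof -
      have "real (card destroyed) \<le> 3 * real (i - 1)" using c0 by linarith
      thus ?thesis using pos by (intro mult_right_mono) auto
    qed
    finally show ?thesis .
  qed
  show ?thesis unfolding sw of_nat_add using A B by linarith
qed



lemma card_diff2:
  assumes "finite A"
  shows "real (card A) \<le> real (card (A - B - D)) + real (card (A \<inter> B)) + real (card (A \<inter> D))"
proof -
  have "A \<subseteq> (A - B - D) \<union> (A \<inter> B) \<union> (A \<inter> D)" by blast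
  hence "card A \<le> card ((A - B - D) \<union> (A \<inter> B) \<union> (A \<inter> D))" by (intro card_mono) (use assms in auto)
  also have "\<dots> \<le> card (A - B - D) + card (A \<inter> B) + card (A \<inter> D)"
    by (meson add_mono card_Un_le le_trans order_refl)
  finally show ?thesis by linarith
qed

lemma powr_bound:
  fixes n :: nat and c :: real
  assumes "n \<ge> 2"
  shows "4 * (2 * real n ^ 3 * real n powr (- (c + 6))) \<le> real n powr (- c)"
proof -
  have n0: "real n > 0" using assms by simp
  have p3: "real n powr (3::real) = real n ^ 3" using powr_realpow[OF n0, of 3] by (simp only: of_nat_numeral)
  have "real n ^ 3 * real n powr (- (c + 6)) = real n powr (3::real) * real n powr (- (c + 6))"
    unfolding p3 ..
  also have "\<dots> = real n powr (3 + - (c + 6))" by (rule powr_add[symmetric])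
  also have "\<dots> = real n powr (- c + - 3)" by (simp add: algebra_simps)
  also have "\<dots> = real n powr (- c) * real n powr (- 3)" by (rule powr_add)
  also have "\<dots> = real n powr (- c) / real n ^ 3"
    using p3 by (simp add: powr_minus divide_inverse)
  finally have e: "real n ^ 3 * real n powr (- (c + 6)) = real n powr (- c) / real n ^ 3" .
  have n3: "8 \<le> real n ^ 3" using power_mono[of 2 "real n" 3] assms by simp
  define X where "X = real n powr (- c)"
  have X: "X \<ge> 0" unfolding X_def by simp
  have "8 * (X / real n ^ 3) \<le> X"
  proof -
    have "8 * X \<le> X * real n ^ 3" using mult_left_mono[OF n3 X] by (simp add: mult.commute)
    thus ?thesis using n0 by (simp add: divide_le_eq)
  qed
  thus ?thesis using e unfolding X_def by (simp add: algebra_simps)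
qed


lemma main_n2:
  fixes c :: real
  assumes c: "c > 0" and fin: "finite P" and n: "card P = n" and gp: "general_position P"
    and i: "1 \<le> i" "i \<le> n" and n2: "n \<ge> 2"
  shows "measure_pmf.prob (pmf_of_set (permutations_of_set P))
             {xs. real (stage_work xs i) \<le> (12 + 6 * (c + 6)) * real n * ln (real n)}
           \<ge> 1 - real n powr (- c)"
proof -
  let ?perms = "permutations_of_set P"
  define M where "M j = (c + 6) * real n * ln (real n) / real j" for j :: nat
  define Bad where "Bad j = {xs \<in> ?perms. \<exists>t\<in>DT (set (take j xs)).
            real (card (conflict_list t (set (drop j xs)))) > M j}" for j
  define Bad0 where "Bad0 = (if i \<ge> 2 then Bad (i - 1) else {})"
  define B where "B = (12 + 6 * (c + 6)) * real n * ln (real n)"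
  have n0: "real n > 0" using n2 by simp
  have ln2: "ln (real n) \<ge> 1 / 2"
  proof -
    have "ln (1 / real n) \<le> 1 / real n - 1" using ln_le_minus_one[of "1 / real n"] n0 by simp
    hence "- ln (real n) \<le> 1 / real n - 1" using n0 by (simp add: ln_div)
    moreover have "1 / real n \<le> 1 / 2" using n2 by (simp add: divide_le_eq)
    ultimately show ?thesis by linarith
  qed
  have lnpos: "ln (real n) \<ge> 0" using ln2 by linarith
  have Mnn: "\<And>j. M j \<ge> 0" unfolding M_def using c lnpos by simp
  have badc: "\<And>j. 1 \<le> j \<Longrightarrow> real (card (Bad j)) \<le> 2 * real n ^ 3 * real n powr (- (c + 6)) * fact n"
  proof -
    fix j :: nat assume j: "1 \<le> j"
    have "real (card (Bad j)) \<le> real (card (Cands P)) * exp (- M j * real j / real n) * fact n"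
      unfolding Bad_def using bad_count[OF fin n gp, of j "M j"] n0 by simp
    also have "exp (- M j * real j / real n) = real n powr (- (c + 6))"
    proof -
      have "- M j * real j / real n = - (c + 6) * ln (real n)" unfolding M_def using j n0 by (simp add: field_simps)
      thus ?thesis using n0 by (simp add: powr_def)
    qed
    also have "real (card (Cands P)) \<le> 2 * real n ^ 3"
      using card_cands[OF fin] n by (metis of_nat_le_iff of_nat_mult of_nat_numeral of_nat_power)
    hence "real (card (Cands P)) * real n powr (- (c + 6)) * fact n \<le> 2 * real n ^ 3 * real n powr (- (c + 6)) * fact n"
      by (intro mult_right_mono) auto
    finally show "real (card (Bad j)) \<le> 2 * real n ^ 3 * real n powr (- (c + 6)) * fact n" .
  qed
  have bad0c: "real (card Bad0) \<le> 2 * real n ^ 3 * real n powr (- (c + 6)) * fact n"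
    unfolding Bad0_def using badc[of "i - 1"] by (auto intro: mult_nonneg_nonneg)
  have good: "\<And>xs. xs \<in> ?perms - Bad i - Bad0 \<Longrightarrow> real (stage_work xs i) \<le> B"
  proof -
    fix xs assume xs: "xs \<in> ?perms - Bad i - Bad0"
    have w: "real (stage_work xs i) \<le> 3 * real i * (1 + M i) + 3 * real (i - 1) * (1 + M (i - 1))"
    proof (rule work_bound[OF _ fin n gp i])
      show "xs \<in> ?perms" using xs by blast
      show "\<forall>t\<in>DT (set (take i xs)). real (card (conflict_list t (set (drop i xs)))) \<le> M i"
        using xs unfolding Bad_def by (auto simp: not_less)
      show "2 \<le> i \<longrightarrow> (\<forall>t\<in>DT (set (take (i - 1) xs)). real (card (conflict_list t (set (drop (i - 1) xs)))) \<le> M (i - 1))"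
        using xs unfolding Bad_def Bad0_def by (auto simp: not_less)
    qed (use Mnn in auto)
    have e1: "3 * real i * (1 + M i) = 3 * real i + 3 * ((c + 6) * real n * ln (real n))"
      unfolding M_def using i by (simp add: field_simps)
    have e2: "3 * real (i - 1) * (1 + M (i - 1)) \<le> 3 * real (i - 1) + 3 * ((c + 6) * real n * ln (real n))"
    proof (cases "i = 1")
      case True thus ?thesis using c n0 lnpos by simp
    next
      case False
      hence "real (i - 1) > 0" using i by simp
      thus ?thesis unfolding M_def by (simp add: field_simps)
    qed
    have "real n \<le> 2 * real n * ln (real n)" using ln2 n0 by (simp add: mult_left_mono[of "1/2" "ln (real n)" "2 * real n", simplified])
    moreover have "real i \<le> real n" "real (i - 1) \<le> real n" using i by auto
    ultimately have "real (stage_work xs i) \<le> 12 * real n * ln (real n) + 6 * ((c + 6) * real n * ln (real n))"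
      using w e1 e2 by linarith
    thus "real (stage_work xs i) \<le> B" unfolding B_def by (simp add: algebra_simps)
  qed
  have pne: "?perms \<noteq> {}" using fin by simp
  have cardp: "card ?perms = fact n" using fin n by simp
  have "measure_pmf.prob (pmf_of_set ?perms) {xs. real (stage_work xs i) \<le> B}
        = real (card (?perms \<inter> {xs. real (stage_work xs i) \<le> B})) / real (card ?perms)"
    by (rule measure_pmf_of_set[OF pne finite_permutations_of_set])
  also have "\<dots> \<ge> real (card (?perms - Bad i - Bad0)) / fact n"
  proof -
    have "card (?perms - Bad i - Bad0) \<le> card (?perms \<inter> {xs. real (stage_work xs i) \<le> B})"
      by (intro card_mono) (use good in auto)
    thus ?thesis unfolding cardp of_nat_fact by (intro divide_right_mono) auto
  qed
  moreover have "real (card (?perms - Bad i - Bad0)) / fact n \<ge> 1 - real n powr (- c)"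
  proof -
    have fpos: "(fact n :: real) > 0" by simp
    have "real (fact n) \<le> real (card (?perms - Bad i - Bad0)) + real (card (?perms \<inter> Bad i)) + real (card (?perms \<inter> Bad0))"
      using card_diff2[of ?perms "Bad i" Bad0] cardp by simp
    moreover have "real (card (?perms \<inter> Bad i)) \<le> real (card (Bad i))"
      by (intro of_nat_mono card_mono) (auto simp: Bad_def)
    moreover have "real (card (?perms \<inter> Bad0)) \<le> real (card Bad0)"
      by (intro of_nat_mono card_mono) (auto simp: Bad0_def Bad_def)
    ultimately have "fact n - 4 * real n ^ 3 * real n powr (- (c + 6)) * fact n \<le> real (card (?perms - Bad i - Bad0))"
      using badc[OF i(1)] bad0c by simp
    moreover have "4 * real n ^ 3 * real n powr (- (c + 6)) * fact n \<le> real n powr (- c) * fact n"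
    proof (rule mult_right_mono)
      define Y where "Y = real n ^ 3 * real n powr (- (c + 6))"
      have Y: "Y \<ge> 0" unfolding Y_def by simp
      have a: "4 * (2 * real n ^ 3 * real n powr (- (c + 6))) = 8 * Y" unfolding Y_def by simp
      have b: "4 * real n ^ 3 * real n powr (- (c + 6)) = 4 * Y" unfolding Y_def by simp
      show "4 * real n ^ 3 * real n powr (- (c + 6)) \<le> real n powr (- c)"
        using powr_bound[OF n2, of c] Y unfolding a b by linarith
    qed simp
    moreover have "(1 - real n powr (- c)) * fact n = fact n - real n powr (- c) * fact n"
      by (simp add: algebra_simps)
    ultimately have "(1 - real n powr (- c)) * fact n \<le> real (card (?perms - Bad i - Bad0))"
      by linarith
    thus ?thesis using fpos by (simp add: le_divide_eq)
  qed
  ultimately show ?thesis unfolding B_def by linarith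
qed


theorem mainTheorem4:
  fixes c :: real
  assumes "c > 0"
  shows "\<exists>C > 0. \<forall>(P :: pt set) (n :: nat) (i :: nat).
           finite P \<and> card P = n \<and> general_position P \<and> 1 \<le> i \<and> i \<le> n \<longrightarrow>
           measure_pmf.prob (pmf_of_set (permutations_of_set P))
             {xs. real (stage_work xs i) \<le> C * real n * ln (real n)}
           \<ge> 1 - real n powr (- c)"
proof (intro exI[of _ "12 + 6 * (c + 6)"] conjI allI impI)
  show "12 + 6 * (c + 6) > 0" using assms by simp
next
  fix P :: "pt set" and n i :: nat
  assume H: "finite P \<and> card P = n \<and> general_position P \<and> 1 \<le> i \<and> i \<le> n"
  show "measure_pmf.prob (pmf_of_set (permutations_of_set P))
             {xs. real (stage_work xs i) \<le> (12 + 6 * (c + 6)) * real n * ln (real n)}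
           \<ge> 1 - real n powr (- c)"
  proof (cases "n \<ge> 2")
    case True
    thus ?thesis using main_n2[OF assms, of P n i] H by blast
  next
    case False
    hence "n = 1" using H by linarith
    thus ?thesis by (simp add: measure_nonneg)
  qed
qed

end
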